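(* Let $G$ be a simple cubic graph on vertex set $[n]$ with girth at least $16$, let $A$ be a MAI set of $G$, $B=V(G)\setminus A$, and let $Y$ (resp. $Z$) be the set of vertices of degree $1$ in $G[A]$ (resp. $G[B]$). Let $J$ be the set of edges of $G$ with one end in $Y$ and the other in $Z$ (under these hypotheses $J$ is a matching). Let $H=H(A)$ be the graph with vertex set $J$ in which two distinct elements $yz, y'z'\in J$ ($y,y'\in Y$, $z,z'\in Z$) are adjacent if $yy'\in E(G)$ or $zz'\in E(G)$. Then $G$ has at least $I(H)$ distinct MAI sets.
   Context: A vertex set $A$ of a graph $G$ is an AI set (almost independent set) if $\Delta(G[A])\le 1$, i.e. every component of the induced subgraph $G[A]$ is a single vertex or a single edge. A vertex set $A$ is a MAI set (maximum almost independent set) of $G$ if (M1) $A$ is an AI set, (M2) $A$ contains an independent set of size $\alpha(G)$, and (M3) $A$ has maximum cardinality among all vertex sets satisfying (M1) and (M2). For a graph $H$, $I(H)$ denotes the total number of independent sets of $H$, including the empty set. *)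

theory Defs
  imports Main
begin

definition simple_graph :: "'a set \<Rightarrow> ('a \<Rightarrow> 'a \<Rightarrow> bool) \<Rightarrow> bool" where
  "simple_graph V E \<longleftrightarrow> finite V \<and> (\<forall>x y. E x y \<longrightarrow> x \<in> V \<and> y \<in> V) \<and>
     (\<forall>x y. E x y \<longrightarrow> E y x) \<and> (\<forall>x. \<not> E x x)"

definition cubic :: "'a set \<Rightarrow> ('a \<Rightarrow> 'a \<Rightarrow> bool) \<Rightarrow> bool" where
  "cubic V E \<longleftrightarrow> (\<forall>v\<in>V. card {u\<in>V. E v u} = 3)"

definition is_cycle :: "'a set \<Rightarrow> ('a \<Rightarrow> 'a \<Rightarrow> bool) \<Rightarrow> 'a list \<Rightarrow> bool" where
  "is_cycle V E cs \<longleftrightarrow> length cs \<ge> 3 \<and> distinct cs \<and> set cs \<subseteq> V \<and>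
     (\<forall>i < length cs. E (cs ! i) (cs ! ((i + 1) mod length cs)))"

definition girth_at_least :: "'a set \<Rightarrow> ('a \<Rightarrow> 'a \<Rightarrow> bool) \<Rightarrow> nat \<Rightarrow> bool" where
  "girth_at_least V E g \<longleftrightarrow> (\<forall>cs. is_cycle V E cs \<longrightarrow> length cs \<ge> g)"

definition independent :: "'a set \<Rightarrow> ('a \<Rightarrow> 'a \<Rightarrow> bool) \<Rightarrow> 'a set \<Rightarrow> bool" where
  "independent V E S \<longleftrightarrow> S \<subseteq> V \<and> (\<forall>x\<in>S. \<forall>y\<in>S. \<not> E x y)"

definition alpha :: "'a set \<Rightarrow> ('a \<Rightarrow> 'a \<Rightarrow> bool) \<Rightarrow> nat" where
  "alpha V E = Max {card S | S. independent V E S}"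

definition deg_in :: "('a \<Rightarrow> 'a \<Rightarrow> bool) \<Rightarrow> 'a set \<Rightarrow> 'a \<Rightarrow> nat" where
  "deg_in E S v = card {u\<in>S. E v u}"

definition AI_set :: "'a set \<Rightarrow> ('a \<Rightarrow> 'a \<Rightarrow> bool) \<Rightarrow> 'a set \<Rightarrow> bool" where
  "AI_set V E A \<longleftrightarrow> A \<subseteq> V \<and> (\<forall>v\<in>A. deg_in E A v \<le> 1)"

definition AI_alpha :: "'a set \<Rightarrow> ('a \<Rightarrow> 'a \<Rightarrow> bool) \<Rightarrow> 'a set \<Rightarrow> bool" where
  "AI_alpha V E A \<longleftrightarrow> AI_set V E A \<and>
     (\<exists>S. S \<subseteq> A \<and> independent V E S \<and> card S = alpha V E)"

definition MAI_set :: "'a set \<Rightarrow> ('a \<Rightarrow> 'a \<Rightarrow> bool) \<Rightarrow> 'a set \<Rightarrow> bool" where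
  "MAI_set V E A \<longleftrightarrow> AI_alpha V E A \<and>
     (\<forall>A'. AI_alpha V E A' \<longrightarrow> card A' \<le> card A)"

definition num_indep :: "'b set \<Rightarrow> ('b \<Rightarrow> 'b \<Rightarrow> bool) \<Rightarrow> nat" where
  "num_indep W R = card {S. independent W R S}"

definition Yset :: "('a \<Rightarrow> 'a \<Rightarrow> bool) \<Rightarrow> 'a set \<Rightarrow> 'a set" where
  "Yset E A = {v\<in>A. deg_in E A v = 1}"

definition Jset :: "'a set \<Rightarrow> ('a \<Rightarrow> 'a \<Rightarrow> bool) \<Rightarrow> 'a set \<Rightarrow> ('a \<times> 'a) set" where
  "Jset V E A = {(y, z). y \<in> Yset E A \<and> z \<in> Yset E (V - A) \<and> E y z}"

definition H_adj :: "('a \<Rightarrow> 'a \<Rightarrow> bool) \<Rightarrow> 'a \<times> 'a \<Rightarrow> 'a \<times> 'a \<Rightarrow> bool" where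
  "H_adj E p q \<longleftrightarrow> p \<noteq> q \<and> (E (fst p) (fst q) \<or> E (snd p) (snd q))"

end

theory Submission
  imports Defs
begin

lemma card2_three:
  assumes "finite X" "card X = 2" "a \<in> X" "b \<in> X" "c \<in> X" "a \<noteq> b" "a \<noteq> c" "b \<noteq> c"
  shows False
proof -
  have "{a,b,c} \<subseteq> X" using assms by auto
  hence "card {a,b,c} \<le> card X" using assms(1) by (rule card_mono[rotated])
  thus False using assms by simp
qed

locale mai =
  fixes V :: "'a set" and E :: "'a \<Rightarrow> 'a \<Rightarrow> bool" and A :: "'a set"
  assumes sg: "simple_graph V E" and cub: "cubic V E"
    and notri: "\<And>a b c. E a b \<Longrightarrow> E b c \<Longrightarrow> E c a \<Longrightarrow> False"
    and mai: "MAI_set V E A"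
begin

lemma finV: "finite V" using sg by (simp add: simple_graph_def)
lemma symE: "E x y \<Longrightarrow> E y x" using sg by (simp add: simple_graph_def)
lemma inV1: "E x y \<Longrightarrow> x \<in> V" using sg by (simp add: simple_graph_def)
lemma inV2: "E x y \<Longrightarrow> y \<in> V" using sg by (simp add: simple_graph_def)
lemma irr: "\<not> E x x" using sg by (simp add: simple_graph_def)

lemma AV: "A \<subseteq> V" using mai by (simp add: MAI_set_def AI_alpha_def AI_set_def)
lemma degA: "v \<in> A \<Longrightarrow> deg_in E A v \<le> 1" using mai by (simp add: MAI_set_def AI_alpha_def AI_set_def)
lemma finA: "finite A" using AV finV finite_subset by blast

lemma alpha_max: assumes "independent V E S" shows "card S \<le> alpha V E"
proof -
  have "{card S | S. independent V E S} \<subseteq> card ` Pow V" by (auto simp: independent_def)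
  hence "finite {card S | S. independent V E S}" using finV finite_subset by blast
  thus ?thesis unfolding alpha_def using assms by (intro Max_ge) auto
qed

lemma maximal:
  assumes "independent V E I" "card I = alpha V E" "v \<in> V" "v \<notin> I"
  shows "\<exists>u\<in>I. E v u"
proof (rule ccontr)
  assume "\<not> ?thesis"
  hence "independent V E (insert v I)" using assms irr symE by (auto simp: independent_def)
  hence "card (insert v I) \<le> alpha V E" by (rule alpha_max)
  moreover have "finite I" using assms(1) finV finite_subset by (auto simp: independent_def)
  ultimately show False using assms by simp
qed

lemma degA_unique:
  assumes "v \<in> A" "u \<in> A" "w \<in> A" "E v u" "E v w" shows "u = w"
proof -
  have f: "finite {x\<in>A. E v x}" using finA by simp
  have "card {x\<in>A. E v x} \<le> Suc 0" using degA[OF assms(1)] by (simp add: deg_in_def)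
  hence "\<forall>x\<in>{x\<in>A. E v x}. \<forall>y\<in>{x\<in>A. E v x}. x = y" by (rule iffD1[OF card_le_Suc0_iff_eq[OF f]])
  moreover have "u \<in> {x\<in>A. E v x}" "w \<in> {x\<in>A. E v x}" using assms by simp_all
  ultimately show ?thesis by blast
qed

lemma Y_partner: assumes "y \<in> Yset E A" shows "\<exists>u\<in>A. E y u"
proof -
  have "card {x\<in>A. E y x} = 1" using assms by (simp add: Yset_def deg_in_def)
  then obtain x where "{x\<in>A. E y x} = {x}" by (rule card_1_singletonE)
  thus ?thesis by auto
qed

lemma YA: "y \<in> Yset E A \<Longrightarrow> y \<in> A" by (simp add: Yset_def)

lemma Z_card: assumes "z \<in> Yset E (V - A)" shows "card {u\<in>A. E z u} = 2"
proof -
  have zV: "z \<in> V" using assms by (simp add: Yset_def)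
  have "card {u\<in>V. E z u} = 3" using cub zV by (simp add: cubic_def)
  moreover have "{u\<in>V. E z u} = {u\<in>A. E z u} \<union> {u\<in>V - A. E z u}" using AV by auto
  moreover have "card ({u\<in>A. E z u} \<union> {u\<in>V - A. E z u}) = card {u\<in>A. E z u} + card {u\<in>V - A. E z u}"
    using finA finV by (intro card_Un_disjoint) auto
  moreover have "card {u\<in>V - A. E z u} = 1" using assms by (simp add: Yset_def deg_in_def)
  ultimately show ?thesis by simp
qed

lemma Z_neigh:
  assumes "z \<in> Yset E (V - A)" "y \<in> A" "a \<in> A" "y \<noteq> a" "E z y" "E z a" "u \<in> A" "E z u"
  shows "u = y \<or> u = a"
  using card2_three[OF _ Z_card[OF assms(1)], of y a u] assms finA by auto

lemma Z_neigh1: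
  assumes "z \<in> Yset E (V - A)" "y \<in> A" "E z y" "u \<in> A" "E z u" "w \<in> A" "E z w" "u \<noteq> y" "w \<noteq> y"
  shows "u = w"
  using card2_three[OF _ Z_card[OF assms(1)], of y u w] assms finA by auto

lemma avoid:
  assumes T: "T \<subseteq> Yset E A" and nadj: "\<forall>x\<in>T. \<forall>y\<in>T. \<not> E x y"
  shows "\<exists>I'. I' \<subseteq> A - T \<and> independent V E I' \<and> card I' = alpha V E"
proof -
  obtain I where I: "I \<subseteq> A" "independent V E I" "card I = alpha V E"
    using mai by (auto simp: MAI_set_def AI_alpha_def)
  define p where "p x = (SOME u. u \<in> A \<and> E x u)" for x
  have p: "p x \<in> A \<and> E x (p x)" if "x \<in> T" for x
  proof -
    have "\<exists>u. u \<in> A \<and> E x u" using Y_partner[of x] T that by blast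
    thus ?thesis unfolding p_def by (rule someI_ex)
  qed
  define g where "g x = (if x \<in> T then p x else x)" for x
  have pu: "u = x" if "x \<in> T" "u \<in> A" "E (p x) u" for x u
  proof -
    have "x \<in> A" using T that(1) YA by blast
    moreover have "E (p x) x" using p[OF that(1)] symE by blast
    ultimately show ?thesis using degA_unique[of "p x" u x] p[OF that(1)] that by blast
  qed
  have inj: "inj_on g I"
  proof (rule inj_onI)
    fix x y assume xy: "x \<in> I" "y \<in> I" "g x = g y"
    show "x = y"
    proof (cases "x \<in> T")
      case True
      show ?thesis
      proof (cases "y \<in> T")
        case True
        then show ?thesis using xy \<open>x \<in> T\<close> p[of x] p[of y] pu[of x y] I symE by (auto simp: g_def)
      next
        case False
        then have "p x = y" using xy \<open>x \<in> T\<close> by (simp add: g_def)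
        then show ?thesis using p[OF \<open>x \<in> T\<close>] I xy by (auto simp: independent_def)
      qed
    next
      case False
      show ?thesis
      proof (cases "y \<in> T")
        case True
        then have "p y = x" using xy False by (simp add: g_def)
        then show ?thesis using p[OF \<open>y \<in> T\<close>] I xy by (auto simp: independent_def)
      next
        case False
        then show ?thesis using xy \<open>x \<notin> T\<close> by (simp add: g_def)
      qed
    qed
  qed
  have sub: "g ` I \<subseteq> A - T"
  proof
    fix v assume "v \<in> g ` I"
    then obtain x where x: "x \<in> I" "v = g x" by auto
    show "v \<in> A - T"
    proof (cases "x \<in> T")
      case True
      then show ?thesis using x p[OF True] nadj by (auto simp: g_def)
    next
      case False
      then show ?thesis using x I by (auto simp: g_def)
    qed
  qed
  have ind: "independent V E (g ` I)"
    unfolding independent_def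
  proof (intro conjI ballI)
    show "g ` I \<subseteq> V" using sub AV by auto
  next
    fix a b assume "a \<in> g ` I" "b \<in> g ` I"
    then obtain x y where xy: "x \<in> I" "y \<in> I" "a = g x" "b = g y" by auto
    have indI: "\<not> E x y" "\<not> E y x" using I xy by (auto simp: independent_def)
    show "\<not> E a b"
    proof
      assume ab: "E a b"
      show False
      proof (cases "x \<in> T")
        case xT: True
        show False
        proof (cases "y \<in> T")
          case True
          then have "p y = x" using pu[OF xT, of "p y"] p[OF True] ab xy xT by (simp add: g_def)
          then show False using p[OF True] indI by simp
        next
          case False
          then have "y = x" using pu[OF xT, of y] ab xy xT I by (auto simp: g_def)
          then show False using False xT by simp
        qed
      next
        case xT: False
        show False
        proof (cases "y \<in> T")
          case True
          then have "x = y" using pu[OF True, of x] ab xy xT I symE by (auto simp: g_def)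
          then show False using True xT by simp
        next
          case False
          then show False using ab xy xT indI by (simp add: g_def)
        qed
      qed
    qed
  qed
  show ?thesis using sub ind card_image[OF inj] I by auto
qed


lemma snd_unique:
  assumes "(y,z) \<in> Jset V E A" "(y',z) \<in> Jset V E A" shows "y = y'"
proof (rule ccontr)
  assume ne: "y \<noteq> y'"
  have a: "y \<in> Yset E A" "y' \<in> Yset E A" "z \<in> Yset E (V - A)" "E y z" "E y' z"
    using assms by (auto simp: Jset_def)
  have nyy: "\<not> E y y'" using notri[of y y' z] a symE by blast
  have "\<forall>x\<in>{y,y'}. \<forall>w\<in>{y,y'}. \<not> E x w" using nyy symE irr by auto
  then obtain I' where I': "I' \<subseteq> A - {y,y'}" "independent V E I'" "card I' = alpha V E"
    using avoid[of "{y,y'}"] a by auto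
  have zV: "z \<in> V" "z \<notin> A" using a(3) by (auto simp: Yset_def)
  then obtain u where u: "u \<in> I'" "E z u" using maximal[OF I'(2,3)] I' by auto
  have "u = y \<or> u = y'"
    using Z_neigh[OF a(3), of y y' u] a YA ne u I' symE by auto
  thus False using u I' by auto
qed

lemma case2:
  assumes S: "independent (Jset V E A) (H_adj E) S"
    and p1: "(y1,z1) \<in> S" and p2: "(y2,z2) \<in> S" and zz: "z1 \<noteq> z2"
    and a: "a \<in> A" "\<forall>u\<in>A. \<not> E a u" "E a z1" "E a z2"
  shows False
proof -
  have SJ: "S \<subseteq> Jset V E A" using S by (simp add: independent_def)
  have J1: "y1 \<in> Yset E A" "z1 \<in> Yset E (V - A)" "E y1 z1" using p1 SJ by (auto simp: Jset_def)
  have J2: "y2 \<in> Yset E A" "z2 \<in> Yset E (V - A)" "E y2 z2" using p2 SJ by (auto simp: Jset_def)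
  have nh: "\<not> H_adj E (y1,z1) (y2,z2)" using S p1 p2 by (simp add: independent_def)
  hence n12: "\<not> E y1 y2" "\<not> E z1 z2" using zz by (auto simp: H_adj_def)
  have "\<forall>x\<in>{y1,y2}. \<forall>w\<in>{y1,y2}. \<not> E x w" using n12 symE irr by auto
  then obtain I' where I': "I' \<subseteq> A - {y1,y2}" "independent V E I'" "card I' = alpha V E"
    using avoid[of "{y1,y2}"] J1 J2 by auto
  have aI: "a \<in> I'"
  proof (rule ccontr)
    assume "a \<notin> I'"
    moreover have "a \<in> V" using a AV by auto
    ultimately obtain u where "u \<in> I'" "E a u" using maximal[OF I'(2,3)] by blast
    thus False using a I' by auto
  qed
  have ya1: "y1 \<noteq> a" "y2 \<noteq> a" using aI I' by auto
  have z1A: "z1 \<notin> A" "z1 \<in> V" "z2 \<notin> A" "z2 \<in> V" using J1 J2 by (auto simp: Yset_def)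
  have nz1: "\<not> E z1 u" if "u \<in> I' - {a}" for u
  proof
    assume "E z1 u"
    hence "u = y1 \<or> u = a" using Z_neigh[OF J1(2), of y1 a u] J1 YA ya1 a symE that I' by auto
    thus False using that I' by auto
  qed
  have nz2: "\<not> E z2 u" if "u \<in> I' - {a}" for u
  proof
    assume "E z2 u"
    hence "u = y2 \<or> u = a" using Z_neigh[OF J2(2), of y2 a u] J2 YA ya1 a symE that I' by auto
    thus False using that I' by auto
  qed
  let ?K = "insert z1 (insert z2 (I' - {a}))"
  have "independent V E ?K"
    using I'(2) nz1 nz2 n12 symE irr z1A unfolding independent_def by (metis insert_iff insert_subset Diff_subset subset_trans)
  hence "card ?K \<le> alpha V E" by (rule alpha_max)
  moreover have "finite I'" using I' finA finite_subset by blast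
  moreover have "z1 \<notin> I'" "z2 \<notin> I'" using z1A I' by auto
  ultimately show False using I' aI zz card_Diff1_less[of I' a]
    by (simp add: card_insert_if)
qed


lemma F_nbrs:
  assumes S: "independent (Jset V E A) (H_adj E) S"
    and v: "v \<in> (A - fst`S) \<union> snd`S" and u: "u \<in> (A - fst`S) \<union> snd`S" and w: "w \<in> (A - fst`S) \<union> snd`S"
    and vu: "E v u" and vw: "E v w"
  shows "u = w"
proof -
  have SJ: "S \<subseteq> Jset V E A" using S by (simp add: independent_def)
  have nh: "\<And>p q. p \<in> S \<Longrightarrow> q \<in> S \<Longrightarrow> \<not> H_adj E p q" using S by (simp add: independent_def)
  show ?thesis
  proof (cases "v \<in> snd`S")
    case True
    then obtain y where yv: "(y,v) \<in> S" by force
    have J: "y \<in> Yset E A" "v \<in> Yset E (V - A)" "E y v" using yv SJ by (auto simp: Jset_def)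
    have cl: "x \<in> A \<and> x \<noteq> y" if "x \<in> (A - fst`S) \<union> snd`S" "E v x" for x
    proof (cases "x \<in> snd`S")
      case True
      then obtain y2 where y2: "(y2,x) \<in> S" by force
      have "(y,v) \<noteq> (y2,x)" using that irr by auto
      then show ?thesis using nh[OF yv y2] that by (simp add: H_adj_def)
    next
      case False
      then show ?thesis using that yv by force
    qed
    show ?thesis using Z_neigh1[OF J(2), of y u w] cl[OF u vu] cl[OF w vw] J YA symE vu vw by auto
  next
    case vnS: False
    hence vA: "v \<in> A" "v \<notin> fst`S" using v by auto
    show ?thesis
    proof (cases "\<exists>z\<in>snd`S. E v z")
      case True
      then obtain y z where yz: "(y,z) \<in> S" "E v z" by force
      have J: "y \<in> Yset E A" "z \<in> Yset E (V - A)" "E y z" using yz SJ by (auto simp: Jset_def)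
      have noA: "\<forall>x\<in>A. \<not> E v x"
      proof (intro ballI notI)
        fix x assume x: "x \<in> A" "E v x"
        have "finite {x\<in>A. E v x}" using finA by simp
        moreover have "{x\<in>A. E v x} \<noteq> {}" using x by auto
        ultimately have "card {x\<in>A. E v x} \<noteq> 0" by simp
        hence "v \<in> Yset E A" using degA[OF vA(1)] vA by (simp add: Yset_def deg_in_def)
        hence "(v,z) \<in> Jset V E A" using J yz by (simp add: Jset_def)
        hence "v = y" using snd_unique[of v z y] yz SJ by auto
        thus False using vA yz by force
      qed
      have uS: "u \<in> snd`S" using u vu noA by auto
      have wS: "w \<in> snd`S" using w vw noA by auto
      show ?thesis
      proof (rule ccontr)
        assume "u \<noteq> w"
        moreover obtain y1 where "(y1,u) \<in> S" using uS by force
        moreover obtain y2 where "(y2,w) \<in> S" using wS by force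
        ultimately show False using case2[OF S, of y1 u y2 w v] vA noA vu vw by auto
      qed
    next
      case False
      then have "u \<in> A" "w \<in> A" using u w vu vw by auto
      then show ?thesis using degA_unique[OF vA(1)] vu vw by blast
    qed
  qed
qed

lemma F_MAI:
  assumes S: "independent (Jset V E A) (H_adj E) S"
  shows "MAI_set V E ((A - fst`S) \<union> snd`S)"
proof -
  let ?F = "(A - fst`S) \<union> snd`S"
  have SJ: "S \<subseteq> Jset V E A" using S by (simp add: independent_def)
  have nh: "\<And>p q. p \<in> S \<Longrightarrow> q \<in> S \<Longrightarrow> \<not> H_adj E p q" using S by (simp add: independent_def)
  have fstY: "fst`S \<subseteq> Yset E A" using SJ by (auto simp: Jset_def)
  have sndZ: "snd`S \<subseteq> V - A" using SJ by (auto simp: Jset_def Yset_def)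
  have fstA: "fst`S \<subseteq> A" using fstY YA by auto
  have FV: "?F \<subseteq> V" using AV sndZ by auto
  have finF: "finite ?F" using FV finV finite_subset by blast
  have AI: "AI_set V E ?F"
    unfolding AI_set_def
  proof (intro conjI ballI FV)
    fix v assume v: "v \<in> ?F"
    have fin2: "finite {x\<in>?F. E v x}" using finF by (rule rev_finite_subset) blast
    have "\<forall>x\<in>{x\<in>?F. E v x}. \<forall>y\<in>{x\<in>?F. E v x}. x = y"
      using F_nbrs[OF S v] by blast
    hence "card {x\<in>?F. E v x} \<le> Suc 0"
      by (rule iffD2[OF card_le_Suc0_iff_eq[OF fin2]])
    thus "deg_in E ?F v \<le> 1" by (simp add: deg_in_def)
  qed
  have "\<forall>x\<in>fst`S. \<forall>w\<in>fst`S. \<not> E x w"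
  proof (intro ballI)
    fix x w assume "x \<in> fst`S" "w \<in> fst`S"
    then obtain p q where pq: "p \<in> S" "q \<in> S" "x = fst p" "w = fst q" by auto
    show "\<not> E x w"
    proof (cases "p = q")
      case True then show ?thesis using pq irr by simp
    next
      case False then show ?thesis using nh[OF pq(1,2)] pq by (simp add: H_adj_def)
    qed
  qed
  then obtain I' where I': "I' \<subseteq> A - fst`S" "independent V E I'" "card I' = alpha V E"
    using avoid[OF fstY] by blast
  have AIa: "AI_alpha V E ?F" unfolding AI_alpha_def using AI I' by blast
  have finS: "finite S"
  proof -
    have "Jset V E A \<subseteq> V \<times> V" using inV1 inV2 by (auto simp: Jset_def)
    moreover have "finite (V \<times> V)" using finV by simp
    ultimately show ?thesis using SJ by (meson finite_subset subset_trans)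
  qed
  have injs: "inj_on snd S"
  proof (rule inj_onI)
    fix p q assume pq: "p \<in> S" "q \<in> S" "snd p = snd q"
    have "p \<in> Jset V E A" "q \<in> Jset V E A" using pq SJ by blast+
    moreover have "(fst q, snd p) = q" using pq(3) by (simp add: prod_eq_iff)
    ultimately have "(fst p, snd p) \<in> Jset V E A" "(fst q, snd p) \<in> Jset V E A" by simp_all
    hence "fst p = fst q" by (rule snd_unique)
    thus "p = q" using pq(3) by (simp add: prod_eq_iff)
  qed
  have "card ?F = card (A - fst`S) + card (snd`S)"
  proof (rule card_Un_disjoint)
    show "finite (A - fst`S)" using finA by simp
    show "finite (snd`S)" using finS by simp
    show "(A - fst`S) \<inter> snd`S = {}" using sndZ by blast
  qed
  also have "card (A - fst`S) = card A - card (fst`S)"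
    using fstA finite_subset[OF fstA finA] by (intro card_Diff_subset)
  also have "card (snd`S) = card S" using card_image[OF injs] .
  finally have "card ?F = card A - card (fst`S) + card S" .
  moreover have "card (fst`S) \<le> card S" using card_image_le finS by blast
  ultimately have ge: "card A \<le> card ?F" by linarith
  have "\<forall>A'. AI_alpha V E A' \<longrightarrow> card A' \<le> card A" using mai by (simp add: MAI_set_def)
  thus ?thesis using AIa ge by (auto simp: MAI_set_def)
qed

lemma F_inj:
  assumes S1: "independent (Jset V E A) (H_adj E) S1" and S2: "independent (Jset V E A) (H_adj E) S2"
    and eq: "(A - fst`S1) \<union> snd`S1 = (A - fst`S2) \<union> snd`S2"
  shows "S1 = S2"
proof -
  have SJ: "S1 \<subseteq> Jset V E A" "S2 \<subseteq> Jset V E A" using S1 S2 by (auto simp: independent_def)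
  have d: "snd`S1 \<inter> A = {}" "snd`S2 \<inter> A = {}" using SJ by (auto simp: Jset_def Yset_def)
  have "snd`S1 = ((A - fst`S1) \<union> snd`S1) - A" using d by auto
  also have "\<dots> = snd`S2" using eq d by auto
  finally have sn: "snd`S1 = snd`S2" .
  have key: "p \<in> Sb" if "p \<in> Sa" "snd`Sa = snd`Sb" "Sa \<subseteq> Jset V E A" "Sb \<subseteq> Jset V E A" for p Sa Sb
  proof -
    have "snd p \<in> snd`Sb" using that by blast
    then obtain q where q: "q \<in> Sb" "snd q = snd p" by force
    have "p \<in> Jset V E A" "q \<in> Jset V E A" using that q by blast+
    moreover have "(fst q, snd p) = q" using q(2) by (simp add: prod_eq_iff)
    ultimately have "(fst p, snd p) \<in> Jset V E A" "(fst q, snd p) \<in> Jset V E A" by simp_all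
    hence "fst p = fst q" by (rule snd_unique)
    hence "p = q" using q(2) by (simp add: prod_eq_iff)
    thus ?thesis using q by simp
  qed
  have "S1 \<subseteq> S2" using key[of _ S1 S2] sn SJ by blast
  moreover have "S2 \<subseteq> S1" using key[of _ S2 S1] sn SJ by blast
  ultimately show ?thesis by blast
qed

end

theorem lemma9:
  fixes n :: nat and E :: "nat \<Rightarrow> nat \<Rightarrow> bool" and A :: "nat set"
  assumes "simple_graph {1..n} E"
    and "cubic {1..n} E"
    and "girth_at_least {1..n} E 16"
    and "MAI_set {1..n} E A"
  shows "card {A'. MAI_set {1..n} E A'} \<ge> num_indep (Jset {1..n} E A) (H_adj E)"
proof -
  have notri: False if abc: "E a b" "E b c" "E c a" for a b c
  proof -
    have sg: "\<forall>x y. E x y \<longrightarrow> x \<in> {1..n} \<and> y \<in> {1..n}" "\<forall>x. \<not> E x x"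
      using assms(1) by (simp_all add: simple_graph_def)
    have ne: "a \<noteq> b" "b \<noteq> c" "c \<noteq> a" using sg(2) abc by auto
    have "is_cycle {1..n} E [a,b,c]"
      unfolding is_cycle_def
    proof (intro conjI allI impI)
      show "3 \<le> length [a,b,c]" by simp
      show "distinct [a,b,c]" using ne by auto
      show "set [a,b,c] \<subseteq> {1..n}" using sg(1) abc by auto
    next
      fix i assume "i < length [a,b,c]"
      hence "i = 0 \<or> i = 1 \<or> i = 2" by auto
      thus "E ([a,b,c] ! i) ([a,b,c] ! ((i + 1) mod length [a,b,c]))" using abc by auto
    qed
    hence "16 \<le> length [a,b,c]" using assms(3) unfolding girth_at_least_def by blast
    thus False by simp
  qed
  interpret mai "{1..n}" E A
    using assms notri by unfold_locales blast+
  let ?f = "\<lambda>S. (A - fst`S) \<union> snd`S"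
  let ?D = "{S. independent (Jset {1..n} E A) (H_adj E) S}"
  have inj: "inj_on ?f ?D" using F_inj by (intro inj_onI) simp
  have sub: "?f ` ?D \<subseteq> {A'. MAI_set {1..n} E A'}" using F_MAI by auto
  have "{A'. MAI_set {1..n} E A'} \<subseteq> Pow {1..n}"
    by (auto simp: MAI_set_def AI_alpha_def AI_set_def)
  hence fin: "finite {A'. MAI_set {1..n} E A'}" by (rule finite_subset) simp
  show ?thesis unfolding num_indep_def using card_inj_on_le[OF inj sub fin] .
qed

end
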